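(* For all $m,t\in\mathbb{N}$ and $1\leq r\leq m$, \[ R_t(r,m)\leq \left(1-\frac{1}{2^t}\right)2^m -\frac{\sqrt{2^t-1}}{2^t}\binom{m}{r}. \]
   Context: For a $t\times n$ matrix $\mathbf{v}$ over $\mathbb{F}_2$ with rows $\overline{v}_1,\dots,\overline{v}_t$, $\mathrm{wt}^{(t)}(\mathbf{v})=\left|\bigcup_{i} \mathrm{supp}(\overline{v}_i)\right|$ and $d^{(t)}(\mathbf{u},\mathbf{v})=\mathrm{wt}^{(t)}(\mathbf{u}-\mathbf{v})$. For a linear code $C\subseteq\mathbb{F}_2^n$, $C^t$ is the set of $t\times n$ matrices all of whose rows lie in $C$, and $R_t(C)$ is the smallest integer $\rho$ such that for every $\mathbf{v}\in\mathbb{F}_2^{t\times n}$ some $\mathbf{c}\in C^t$ has $d^{(t)}(\mathbf{v},\mathbf{c})\le\rho$. Reed–Muller codes $\mathrm{RM}(r,m)\subseteq\mathbb{F}_2^{2^m}$: $\mathrm{RM}(0,m)=\{\overline{0},\overline{1}\}$, $\mathrm{RM}(m,m)=\mathbb{F}_2^{2^m}$, and for $1\leq r\leq m-1$, $\mathrm{RM}(r,m)=\{(\overline{u},\overline{u}+\overline{v}) : \overline{u}\in \mathrm{RM}(r,m-1),\ \overline{v}\in\mathrm{RM}(r-1,m-1)\}$. $R_t(r,m)=R_t(\mathrm{RM}(r,m))$. *)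

theory Defs
  imports Complex_Main
begin

text \<open>Vectors of F_2^n are boolean lists of length n (True = 1); addition is
  componentwise exclusive or. A t x n matrix is a function from row indices to
  rows; only rows i < t are relevant.\<close>

definition vadd :: "bool list \<Rightarrow> bool list \<Rightarrow> bool list" where
  "vadd u v = map2 (\<noteq>) u v"

definition supp :: "bool list \<Rightarrow> nat set" where
  "supp v = {j. j < length v \<and> v ! j}"

definition wt_t :: "nat \<Rightarrow> (nat \<Rightarrow> bool list) \<Rightarrow> nat" where
  "wt_t t V = card (\<Union>i<t. supp (V i))"

definition d_t :: "nat \<Rightarrow> (nat \<Rightarrow> bool list) \<Rightarrow> (nat \<Rightarrow> bool list) \<Rightarrow> nat" where
  "d_t t U V = wt_t t (\<lambda>i. vadd (U i) (V i))"

definition cov_rad_t :: "nat \<Rightarrow> nat \<Rightarrow> bool list set \<Rightarrow> nat" where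
  "cov_rad_t t n C = (LEAST \<rho>. \<forall>V. (\<forall>i<t. length (V i) = n) \<longrightarrow>
       (\<exists>U. (\<forall>i<t. U i \<in> C) \<and> d_t t V U \<le> \<rho>))"

fun RM :: "nat \<Rightarrow> nat \<Rightarrow> bool list set" where
  "RM r 0 = {v. length v = 1}"
| "RM r (Suc m) =
     (if r = 0 then {replicate (2^Suc m) False, replicate (2^Suc m) True}
      else if Suc m \<le> r then {v. length v = 2^Suc m}
      else {u @ vadd u v | u v. u \<in> RM r m \<and> v \<in> RM (r - 1) m})"

definition R_t :: "nat \<Rightarrow> nat \<Rightarrow> nat \<Rightarrow> nat" where
  "R_t t r m = cov_rad_t t (2^m) (RM r m)"

end

theory Submission imports Defs begin

lemma vadd_length[simp]: "length (vadd u v) = min (length u) (length v)"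
  by (simp add: vadd_def)

lemma vadd_nth[simp]: "j < length u \<Longrightarrow> j < length v \<Longrightarrow> vadd u v ! j = (u ! j \<noteq> v ! j)"
  by (simp add: vadd_def)

lemma RM_length: "v \<in> RM r m \<Longrightarrow> length v = 2^m"
proof (induction m arbitrary: r v)
  case 0 then show ?case by simp
next
  case (Suc m)
  then show ?case by (auto split: if_splits)
qed

lemma RM_nonempty: "RM r m \<noteq> {}"
proof (induction m arbitrary: r)
  case 0
  have "[True] \<in> RM r 0" by simp
  then show ?case by blast
next
  case (Suc m)
  obtain u where u: "u \<in> RM r m" using Suc by blast
  obtain w where w: "w \<in> RM (r-1) m" using Suc by blast
  have "\<exists>x::bool list. length x = 2 * 2 ^ m" by (rule exI[of _ "replicate (2*2^m) True"]) simp
  then show ?case using u w by (auto split: if_splits)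
qed

lemma RM_finite: "finite (RM r m)"
proof -
  have "RM r m \<subseteq> {xs. set xs \<subseteq> UNIV \<and> length xs = 2^m}" using RM_length by auto
  moreover have "finite {xs::bool list. set xs \<subseteq> UNIV \<and> length xs = 2^m}"
    by (rule finite_lists_length_eq) simp
  ultimately show ?thesis by (rule finite_subset)
qed

lemma RM_full: "RM m m = {v. length v = 2^m}"
  by (cases m) auto

lemma supp_fin: "finite (supp v)" unfolding supp_def by simp

lemma cov_le:
  assumes "\<And>V. (\<forall>i<t. length (V i) = n) \<Longrightarrow> (\<exists>U. (\<forall>i<t. U i \<in> C) \<and> d_t t V U \<le> \<rho>)"
  shows "cov_rad_t t n C \<le> \<rho>"
  unfolding cov_rad_t_def by (rule Least_le) (use assms in blast)

lemma cov_ex: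
  assumes "C \<noteq> {}" "\<forall>i<t. length (V i) = n"
  shows "\<exists>U. (\<forall>i<t. U i \<in> C) \<and> d_t t V U \<le> cov_rad_t t n C"
proof -
  obtain c where c: "c \<in> C" using assms by blast
  let ?P = "\<lambda>\<rho>. \<forall>V. (\<forall>i<t. length (V i) = n) \<longrightarrow>
       (\<exists>U. (\<forall>i<t. U i \<in> C) \<and> d_t t V U \<le> \<rho>)"
  have "?P n"
  proof (intro allI impI)
    fix V' :: "nat \<Rightarrow> bool list" assume len: "\<forall>i<t. length (V' i) = n"
    have "(\<Union>i<t. supp (vadd (V' i) c)) \<subseteq> {..<n}"
      using len by (auto simp: supp_def)
    then have "d_t t V' (\<lambda>_. c) \<le> n"
      unfolding d_t_def wt_t_def using card_mono[of "{..<n}"] by fastforce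
    then show "\<exists>U. (\<forall>i<t. U i \<in> C) \<and> d_t t V' U \<le> n" using c by (intro exI[of _ "\<lambda>_. c"]) auto
  qed
  then have "?P (cov_rad_t t n C)" unfolding cov_rad_t_def by (rule LeastI)
  then show ?thesis using assms(2) by blast
qed

lemma R_full: "R_t t m m = 0"
proof -
  have "cov_rad_t t (2^m) (RM m m) \<le> 0"
  proof (rule cov_le)
    fix V :: "nat \<Rightarrow> bool list" assume len: "\<forall>i<t. length (V i) = 2^m"
    have "(\<Union>i<t. supp (vadd (V i) (V i))) = {}"
      by (auto simp: supp_def)
    then have "d_t t V V = 0" by (simp add: d_t_def wt_t_def)
    then show "\<exists>U. (\<forall>i<t. U i \<in> RM m m) \<and> d_t t V U \<le> 0"
      using len by (intro exI[of _ V]) (simp add: RM_full)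
  qed
  then show ?thesis by (simp add: R_t_def)
qed


lemma R_rec:
  assumes r1: "1 \<le> r" and rm: "r \<le> m"
  shows "R_t t r (Suc m) \<le> R_t t r m + R_t t (r-1) m"
proof -
  let ?N = "2^m::nat"
  have RMS: "RM r (Suc m) = {u @ vadd u v | u v. u \<in> RM r m \<and> v \<in> RM (r - 1) m}"
    using r1 rm by auto
  have "cov_rad_t t (2^Suc m) (RM r (Suc m)) \<le> R_t t r m + R_t t (r-1) m"
  proof (rule cov_le)
    fix V :: "nat \<Rightarrow> bool list" assume len: "\<forall>i<t. length (V i) = 2^Suc m"
    define L where "L i = take ?N (V i)" for i
    define Rr where "Rr i = drop ?N (V i)" for i
    have lenL: "\<forall>i<t. length (L i) = ?N" using len by (simp add: L_def)
    have lenR: "\<forall>i<t. length (Rr i) = ?N" using len by (simp add: Rr_def)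
    obtain U1 where U1: "\<forall>i<t. U1 i \<in> RM r m" and d1: "d_t t L U1 \<le> R_t t r m"
      using cov_ex[OF RM_nonempty lenL] unfolding R_t_def by blast
    define W where "W i = vadd (Rr i) (U1 i)" for i
    have lenW: "\<forall>i<t. length (W i) = ?N" using lenR U1 RM_length by (auto simp: W_def)
    obtain U2 where U2: "\<forall>i<t. U2 i \<in> RM (r-1) m" and d2: "d_t t W U2 \<le> R_t t (r-1) m"
      using cov_ex[OF RM_nonempty lenW] unfolding R_t_def by blast
    define U where "U i = U1 i @ vadd (U1 i) (U2 i)" for i
    have UC: "\<forall>i<t. U i \<in> RM r (Suc m)" unfolding RMS U_def using U1 U2 by blast
    let ?A = "\<Union>i<t. supp (vadd (L i) (U1 i))"
    let ?B = "\<Union>i<t. supp (vadd (W i) (U2 i))"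
    have sub: "(\<Union>i<t. supp (vadd (V i) (U i))) \<subseteq> ?A \<union> (\<lambda>k. k + ?N) ` ?B"
    proof
      fix j assume "j \<in> (\<Union>i<t. supp (vadd (V i) (U i)))"
      then obtain i where i: "i < t" and j: "j \<in> supp (vadd (V i) (U i))" by blast
      have l1: "length (U1 i) = ?N" using U1 i RM_length by blast
      have l2: "length (U2 i) = ?N" using U2 i RM_length by blast
      have lU: "length (U i) = 2 * ?N" using l1 l2 by (simp add: U_def)
      have lV: "length (V i) = 2 * ?N" using len i by simp
      from j have jl: "j < 2 * ?N" and jd: "V i ! j \<noteq> U i ! j"
        using lU lV by (auto simp: supp_def)
      show "j \<in> ?A \<union> (\<lambda>k. k + ?N) ` ?B"
      proof (cases "j < ?N")
        case True
        have "L i ! j = V i ! j" using True by (simp add: L_def)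
        moreover have "U i ! j = U1 i ! j" using True l1 by (simp add: U_def nth_append)
        ultimately have "j \<in> supp (vadd (L i) (U1 i))"
          using True jd l1 lenL i by (simp add: supp_def)
        then show ?thesis using i by blast
      next
        case False
        define k where "k = j - ?N"
        have jk: "j = k + ?N" and kl: "k < ?N" using False jl by (auto simp: k_def)
        have "Rr i ! k = V i ! j" using jk lV by (simp add: Rr_def add.commute)
        moreover have "U i ! j = (U1 i ! k \<noteq> U2 i ! k)" using jk l1 l2 kl by (simp add: U_def nth_append)
        moreover have "W i ! k = (Rr i ! k \<noteq> U1 i ! k)" using kl l1 lenR i by (simp add: W_def)
        ultimately have "k \<in> supp (vadd (W i) (U2 i))"
          using kl jd l2 lenW i by (auto simp: supp_def)
        then show ?thesis using i jk by blast
      qed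
    qed
    have finA: "finite ?A" by (simp add: supp_fin)
    have finB: "finite ?B" by (simp add: supp_fin)
    have "d_t t V U \<le> card (?A \<union> (\<lambda>k. k + ?N) ` ?B)"
      unfolding d_t_def wt_t_def by (rule card_mono) (use finA finB sub in auto)
    also have "\<dots> \<le> card ?A + card ((\<lambda>k. k + ?N) ` ?B)" by (rule card_Un_le)
    also have "\<dots> \<le> card ?A + card ?B" using card_image_le[OF finB] by simp
    also have "\<dots> = d_t t L U1 + d_t t W U2" by (simp add: d_t_def wt_t_def)
    finally have "d_t t V U \<le> R_t t r m + R_t t (r-1) m" using d1 d2 by linarith
    then show "\<exists>U. (\<forall>i<t. U i \<in> RM r (Suc m)) \<and> d_t t V U \<le> R_t t r m + R_t t (r - 1) m"
      using UC by blast
  qed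
  then show ?thesis by (simp add: R_t_def)
qed


definition corr :: "bool list \<Rightarrow> bool list \<Rightarrow> nat set \<Rightarrow> int" where
  "corr c v S = (\<Sum>x\<in>S. if c ! x = v ! x then 1 else -1)"

lemma RM1_Suc: "RM 1 (Suc m) = (\<lambda>(u,e). u @ vadd u (replicate (2^m) e)) ` (RM 1 m \<times> UNIV)"
proof (cases m)
  case 0
  have "RM 1 (Suc 0) = {v. length v = 2}" by simp
  also have "\<dots> = (\<lambda>(u,e). u @ vadd u (replicate (2^0) e)) ` (RM 1 0 \<times> UNIV)"
  proof
    show "{v::bool list. length v = 2} \<subseteq> (\<lambda>(u,e). u @ vadd u (replicate (2^0) e)) ` (RM 1 0 \<times> UNIV)"
    proof
      fix v :: "bool list" assume "v \<in> {v. length v = 2}"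
      then obtain a b where v: "v = [a, b]"
        by (auto simp: numeral_2_eq_2 length_Suc_conv)
      have "v = (\<lambda>(u,e). u @ vadd u (replicate (2^0) e)) ([a], a \<noteq> b)"
        using v by (auto simp: vadd_def)
      moreover have "([a], a \<noteq> b) \<in> RM 1 0 \<times> UNIV" by simp
      ultimately show "v \<in> (\<lambda>(u,e). u @ vadd u (replicate (2^0) e)) ` (RM 1 0 \<times> UNIV)" by blast
    qed
  qed auto
  finally show ?thesis using 0 by simp
next
  case (Suc k)
  have eq: "RM 1 (Suc m) = {u @ vadd u v | u v. u \<in> RM 1 m \<and> v \<in> {replicate (2^m) False, replicate (2^m) True}}"
    using Suc by simp
  show ?thesis unfolding eq
  proof (rule set_eqI, rule iffI)
    fix x assume "x \<in> {u @ vadd u v | u v. u \<in> RM 1 m \<and> v \<in> {replicate (2^m) False, replicate (2^m) True}}"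
    then obtain u e where "x = u @ vadd u (replicate (2^m) e)" "u \<in> RM 1 m" by blast
    then show "x \<in> (\<lambda>(u,e). u @ vadd u (replicate (2^m) e)) ` (RM 1 m \<times> UNIV)" by force
  next
    fix x assume "x \<in> (\<lambda>(u,e). u @ vadd u (replicate (2^m) e)) ` (RM 1 m \<times> UNIV)"
    then obtain p where p: "p \<in> RM 1 m \<times> UNIV" "x = (\<lambda>(u,e). u @ vadd u (replicate (2^m) e)) p" by blast
    obtain u e where "p = (u, e)" by (cases p)
    then have x: "x = u @ vadd u (replicate (2^m) e)" "u \<in> RM 1 m" using p by auto
    have "replicate (2^m) e \<in> {replicate (2^m) False, replicate (2^m) True}" by (cases e) auto
    then show "x \<in> {u @ vadd u v | u v. u \<in> RM 1 m \<and> v \<in> {replicate (2^m) False, replicate (2^m) True}}"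
      using x by blast
  qed
qed

lemma RM1_inj: "inj_on (\<lambda>(u,e). u @ vadd u (replicate (2^m) e)) (RM 1 m \<times> UNIV)"
proof (rule inj_onI, clarify)
  fix u1 e1 u2 e2 assume u1: "u1 \<in> RM 1 m" and u2: "u2 \<in> RM 1 m"
    and eq: "u1 @ vadd u1 (replicate (2 ^ m) e1) = u2 @ vadd u2 (replicate (2 ^ m) e2)"
  have l1: "length u1 = 2^m" and l2: "length u2 = 2^m" using u1 u2 RM_length by auto
  from eq l1 l2 have uu: "u1 = u2" and ww: "vadd u1 (replicate (2 ^ m) e1) = vadd u2 (replicate (2 ^ m) e2)"
    by (auto simp: append_eq_append_conv)
  have "vadd u1 (replicate (2 ^ m) e1) ! 0 = vadd u2 (replicate (2 ^ m) e2) ! 0" using ww by simp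
  then have "e1 = e2" using uu l1 by (cases e1; cases e2) simp_all
  then show "u1 = u2 \<and> e1 = e2" using uu by simp
qed

lemma card_RM1_Suc: "card (RM 1 (Suc m)) = 2 * card (RM 1 m)"
  unfolding RM1_Suc by (subst card_image[OF RM1_inj]) (simp add: card_cartesian_product)

lemma split_set: "(S::nat set) = {x\<in>S. x < N} \<union> (\<lambda>k. k + N) ` {k. k + N \<in> S}"
proof (rule set_eqI)
  fix x show "x \<in> S \<longleftrightarrow> x \<in> {x\<in>S. x < N} \<union> (\<lambda>k. k + N) ` {k. k + N \<in> S}"
  proof (cases "x < N")
    case True then show ?thesis by auto
  next
    case False
    then have x: "x = (x - N) + N" by simp
    show ?thesis
    proof
      assume "x \<in> S"
      then have "x - N \<in> {k. k + N \<in> S}" using x by simp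
      then show "x \<in> {x\<in>S. x < N} \<union> (\<lambda>k. k + N) ` {k. k + N \<in> S}" using x by blast
    qed auto
  qed
qed

lemma corr_append:
  assumes lu: "length u = N" and lw: "length w = N" and lv: "length v = 2*N"
    and S: "S \<subseteq> {..<2*N}"
  shows "corr (u @ w) v S = corr u (take N v) {x\<in>S. x < N} + corr w (drop N v) {k. k + N \<in> S}"
proof -
  let ?S0 = "{x\<in>S. x < N}" and ?S1 = "{k. k + N \<in> S}"
  have fin: "finite S" using S finite_subset by blast
  have "?S1 \<subseteq> {..<N}" using S by auto
  then have S1fin: "finite ?S1" using finite_subset by blast
  have Seq: "S = ?S0 \<union> (\<lambda>k. k + N) ` ?S1" by (rule split_set)
  have disj: "?S0 \<inter> (\<lambda>k. k + N) ` ?S1 = {}" by auto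
  have "corr (u @ w) v S = (\<Sum>x\<in>?S0. if (u@w) ! x = v ! x then 1 else -1)
        + (\<Sum>x\<in>(\<lambda>k. k + N) ` ?S1. if (u@w) ! x = v ! x then 1 else -1)"
    unfolding corr_def by (subst Seq, rule sum.union_disjoint) (use fin S1fin disj in auto)
  also have "(\<Sum>x\<in>?S0. if (u@w) ! x = v ! x then 1 else -1) = corr u (take N v) ?S0"
    unfolding corr_def by (rule sum.cong) (auto simp: nth_append lu)
  also have "(\<Sum>x\<in>(\<lambda>k. k + N) ` ?S1. if (u@w) ! x = v ! x then 1 else (-1::int))
      = (\<Sum>k\<in>?S1. if (u@w) ! (k+N) = v ! (k+N) then 1 else -1)"
    by (subst sum.reindex) (auto simp: inj_on_def)
  also have "\<dots> = corr w (drop N v) ?S1"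
    unfolding corr_def using S lv by (intro sum.cong) (auto simp: nth_append lu add.commute)
  finally show ?thesis .
qed

lemma corr_vadd_rep:
  assumes "S \<subseteq> {..<length u}" "length v = length u"
  shows "corr (vadd u (replicate (length u) e)) v S = (if e then - corr u v S else corr u v S)"
  unfolding corr_def using assms
  by (auto simp: sum_negf[symmetric] intro!: sum.cong)

lemma corr_sq_le1:
  assumes "S \<subseteq> {..<1}"
  shows "(corr c v S)^2 = int (card S)"
proof (cases "S = {}")
  case True then show ?thesis by (simp add: corr_def)
next
  case False
  then have "S = {0}" using assms by auto
  then show ?thesis by (simp add: corr_def)
qed

lemma sumsq:
  "S \<subseteq> {..<2^m} \<Longrightarrow> length v = 2^m \<Longrightarrow>
   (\<Sum>c\<in>RM 1 m. (corr c v S)^2) = int (card (RM 1 m)) * int (card S)"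
proof (induction m arbitrary: S v)
  case 0
  then show ?case using corr_sq_le1[of S] by simp
next
  case (Suc m)
  let ?N = "2^m::nat"
  let ?S0 = "{x\<in>S. x < ?N}" and ?S1 = "{k. k + ?N \<in> S}"
  let ?v0 = "take ?N v" and ?v1 = "drop ?N v"
  let ?f = "\<lambda>(u,e). u @ vadd u (replicate (2^m) e)"
  have S0: "?S0 \<subseteq> {..<2^m}" by auto
  have S1: "?S1 \<subseteq> {..<2^m}" using Suc.prems by auto
  have lv0: "length ?v0 = 2^m" and lv1: "length ?v1 = 2^m" using Suc.prems by auto
  have IH0: "(\<Sum>c\<in>RM 1 m. (corr c ?v0 ?S0)^2) = int (card (RM 1 m)) * int (card ?S0)"
    by (rule Suc.IH[OF S0 lv0])
  have IH1: "(\<Sum>c\<in>RM 1 m. (corr c ?v1 ?S1)^2) = int (card (RM 1 m)) * int (card ?S1)"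
    by (rule Suc.IH[OF S1 lv1])
  have key: "(corr (u @ vadd u (replicate (2^m) e)) v S)^2 = (corr u ?v0 ?S0 + (if e then -1 else 1) * corr u ?v1 ?S1)^2"
    if u: "u \<in> RM 1 m" for u e
  proof -
    have lu: "length u = ?N" using u RM_length by blast
    have "corr (u @ vadd u (replicate (2^m) e)) v S = corr u ?v0 ?S0 + corr (vadd u (replicate (2^m) e)) ?v1 ?S1"
      using Suc.prems lu by (simp add: corr_append)
    also have "corr (vadd u (replicate (2^m) e)) ?v1 ?S1 = (if e then - corr u ?v1 ?S1 else corr u ?v1 ?S1)"
      using corr_vadd_rep[of ?S1 u ?v1 e] S1 lu lv1 by simp
    finally show ?thesis by simp
  qed
  have "(\<Sum>c\<in>RM 1 (Suc m). (corr c v S)^2) = (\<Sum>p\<in>RM 1 m \<times> UNIV. (corr (?f p) v S)^2)"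
    unfolding RM1_Suc by (subst sum.reindex[OF RM1_inj]) simp
  also have "\<dots> = (\<Sum>u\<in>RM 1 m. \<Sum>e\<in>UNIV. (corr (?f (u,e)) v S)^2)"
    by (simp add: sum.cartesian_product split_def)
  also have "\<dots> = (\<Sum>u\<in>RM 1 m. 2 * (corr u ?v0 ?S0)^2 + 2 * (corr u ?v1 ?S1)^2)"
    apply (rule sum.cong[OF refl])
    subgoal premises p for u
      using key[OF p, of False] key[OF p, of True] by (simp add: UNIV_bool power2_eq_square algebra_simps)
    done
  also have "\<dots> = 2 * int (card (RM 1 m)) * (int (card ?S0) + int (card ?S1))"
    using IH0 IH1 by (simp add: sum.distrib sum_distrib_left[symmetric] algebra_simps)
  also have "card S = card ?S0 + card ?S1"
  proof -
    have Seq: "S = ?S0 \<union> (\<lambda>k. k + ?N) ` ?S1" by (rule split_set)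
    have fin: "finite S" using Suc.prems finite_subset by blast
    have S1fin: "finite ?S1" using S1 finite_subset by blast
    have "card S = card ?S0 + card ((\<lambda>k. k + ?N) ` ?S1)"
      by (subst Seq, rule card_Un_disjoint) (use fin S1fin in auto)
    also have "card ((\<lambda>k. k + ?N) ` ?S1) = card ?S1" by (rule card_image) (auto simp: inj_on_def)
    finally show ?thesis .
  qed
  ultimately show ?case using card_RM1_Suc[of m] by (simp add: algebra_simps del: RM.simps)
qed


lemma map_Not_vadd: "map Not (vadd u w) = vadd (map Not u) w"
  by (rule nth_equalityI) auto

lemma RM1_SucE:
  assumes "c \<in> RM 1 (Suc m)"
  obtains u e where "u \<in> RM 1 m" "c = u @ vadd u (replicate (2^m) e)"
proof -
  from assms obtain p where p: "p \<in> RM 1 m \<times> UNIV" "c = (\<lambda>(u,e). u @ vadd u (replicate (2^m) e)) p"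
    unfolding RM1_Suc by blast
  obtain u e where "p = (u, e)" by (cases p)
  then show ?thesis using p that by auto
qed

lemma RM1_SucI: "u \<in> RM 1 m \<Longrightarrow> u @ vadd u (replicate (2^m) e) \<in> RM 1 (Suc m)"
  unfolding RM1_Suc by force

lemma RM1_compl: "c \<in> RM 1 m \<Longrightarrow> map Not c \<in> RM 1 m"
proof (induction m arbitrary: c)
  case 0 then show ?case by simp
next
  case (Suc m)
  from Suc.prems obtain u e where u: "u \<in> RM 1 m" and c: "c = u @ vadd u (replicate (2^m) e)"
    by (rule RM1_SucE)
  have "map Not c = map Not u @ vadd (map Not u) (replicate (2^m) e)"
    using c by (simp add: map_Not_vadd)
  moreover have "map Not u \<in> RM 1 m" using Suc.IH u by blast
  ultimately show ?case using RM1_SucI by metis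
qed

lemma corr_Not: "S \<subseteq> {..<length c} \<Longrightarrow> corr (map Not c) v S = - corr c v S"
  unfolding corr_def by (auto simp: sum_negf[symmetric] intro!: sum.cong)

lemma corr_card: "finite S \<Longrightarrow> corr c v S = 2 * int (card {x\<in>S. c ! x = v ! x}) - int (card S)"
proof -
  assume fin: "finite S"
  let ?P = "{x\<in>S. c ! x = v ! x}" and ?Q = "{x\<in>S. c ! x \<noteq> v ! x}"
  have "corr c v S = (\<Sum>x\<in>?P. 1) + (\<Sum>x\<in>?Q. -1)"
    unfolding corr_def using fin by (simp add: sum.If_cases Int_def)
  also have "\<dots> = int (card ?P) - int (card ?Q)" by simp
  also have "card S = card ?P + card ?Q"
    using fin by (subst card_Un_disjoint[symmetric]) (auto intro: arg_cong[where f=card])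
  ultimately show ?thesis by simp
qed

lemma exists_big:
  assumes fin: "finite C" and ne: "C \<noteq> {}" and s: "(\<Sum>c\<in>C. f c) = int (card C) * k"
  shows "\<exists>c\<in>C. f c \<ge> k"
proof (rule ccontr)
  assume "\<not> ?thesis"
  then have "\<forall>c\<in>C. f c < k" by auto
  then have "(\<Sum>c\<in>C. f c) < (\<Sum>c\<in>C. k)" using fin ne by (intro sum_strict_mono) auto
  then show False using s by simp
qed

lemma key:
  assumes S: "S \<subseteq> {..<2^m}" and lv: "length v = 2^m"
  shows "\<exists>c\<in>RM 1 m. real (card {x\<in>S. c ! x = v ! x}) \<ge> real (card S) / 2 + sqrt (real (card S)) / 2"
proof -
  have fin: "finite S" using S finite_subset by blast
  obtain c where c: "c \<in> RM 1 m" and big: "(corr c v S)^2 \<ge> int (card S)"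
    using exists_big[OF RM_finite RM_nonempty sumsq[OF S lv]] by blast
  have lc: "length c = 2^m" using c RM_length by blast
  define c' where "c' = (if corr c v S \<ge> 0 then c else map Not c)"
  have c'C: "c' \<in> RM 1 m" using c RM1_compl by (simp add: c'_def)
  have cc: "corr c' v S = \<bar>corr c v S\<bar>" using corr_Not[of S c v] S lc by (simp add: c'_def)
  have "real (card S) \<le> (real_of_int (corr c v S))^2" using big
    by (metis of_int_le_iff of_int_of_nat_eq of_int_power)
  then have "sqrt (real (card S)) \<le> \<bar>real_of_int (corr c v S)\<bar>"
    using real_sqrt_le_mono by fastforce
  then have "sqrt (real (card S)) \<le> real_of_int (corr c' v S)" using cc by simp
  also have "real_of_int (corr c' v S) = 2 * real (card {x\<in>S. c' ! x = v ! x}) - real (card S)"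
    using corr_card[OF fin] by simp
  finally show ?thesis using c'C by (intro bexI[of _ c']) auto
qed


fun hh :: "real \<Rightarrow> nat \<Rightarrow> real" where
  "hh n 0 = n"
| "hh n (Suc k) = hh n k / 2 + sqrt (hh n k) / 2"

lemma dist_eq:
  assumes "\<forall>i<t. length (V i) = N \<and> length (U i) = N"
  shows "d_t t V U = N - card {x. x < N \<and> (\<forall>i<t. U i ! x = V i ! x)}"
proof -
  have "(\<Union>i<t. supp (vadd (V i) (U i))) = {..<N} - {x. x < N \<and> (\<forall>i<t. U i ! x = V i ! x)}"
    using assms by (auto simp: supp_def)
  moreover have sub: "{x. x < N \<and> (\<forall>i<t. U i ! x = V i ! x)} \<subseteq> {..<N}" by auto
  moreover have "finite {x. x < N \<and> (\<forall>i<t. U i ! x = V i ! x)}" by (rule finite_subset[OF sub]) simp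
  ultimately show ?thesis unfolding d_t_def wt_t_def by (simp add: card_Diff_subset)
qed

lemma seq:
  "\<forall>V. (\<forall>i<t. length (V i) = 2^m) \<longrightarrow> (\<exists>U. (\<forall>i<t. U i \<in> RM 1 m) \<and>
     real (card {x. x < 2^m \<and> (\<forall>i<t. U i ! x = V i ! x)}) \<ge> hh (2^m) t)"
proof (induction t)
  case 0
  obtain c where "c \<in> RM 1 m" using RM_nonempty by blast
  then show ?case by (intro allI impI exI[of _ "\<lambda>_. c"]) simp
next
  case (Suc t)
  show ?case
  proof (intro allI impI)
    fix V :: "nat \<Rightarrow> bool list" assume len: "\<forall>i<Suc t. length (V i) = 2^m"
    then have lenT: "\<forall>i<t. length (V i) = 2^m" by simp
    from Suc.IH lenT obtain U where U: "\<forall>i<t. U i \<in> RM 1 m"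
      and big: "real (card {x. x < 2^m \<and> (\<forall>i<t. U i ! x = V i ! x)}) \<ge> hh (2^m) t"
      by blast
    define S where "S = {x. x < 2^m \<and> (\<forall>i<t. U i ! x = V i ! x)}"
    have S: "S \<subseteq> {..<2^m}" by (auto simp: S_def)
    obtain c where c: "c \<in> RM 1 m"
      and cb: "real (card {x\<in>S. c ! x = V t ! x}) \<ge> real (card S) / 2 + sqrt (real (card S)) / 2"
      using key[OF S] len by auto
    define U' where "U' = U(t := c)"
    have U': "\<forall>i<Suc t. U' i \<in> RM 1 m" using U c by (auto simp: U'_def less_Suc_eq)
    have eq: "{x. x < 2^m \<and> (\<forall>i<Suc t. U' i ! x = V i ! x)} = {x\<in>S. c ! x = V t ! x}"
      by (auto simp: S_def U'_def less_Suc_eq)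
    have bigS: "hh (2^m) t \<le> real (card S)" using big by (simp add: S_def)
    have sq: "sqrt (hh (2^m) t) \<le> sqrt (real (card S))" by (rule real_sqrt_le_mono[OF bigS])
    have "hh (2^m) (Suc t) \<le> real (card S) / 2 + sqrt (real (card S)) / 2"
      using bigS sq by (simp only: hh.simps)
    also have "\<dots> \<le> real (card {x. x < 2^m \<and> (\<forall>i<Suc t. U' i ! x = V i ! x)})"
      using cb eq by simp
    finally show "\<exists>U. (\<forall>i<Suc t. U i \<in> RM 1 m) \<and>
        hh (2^m) (Suc t) \<le> real (card {x. x < 2^m \<and> (\<forall>i<Suc t. U i ! x = V i ! x)})"
      using U' by blast
  qed
qed

lemma R1_hh: "real (R_t t 1 m) \<le> 2^m - real_of_int \<lceil>hh (2^m) t\<rceil>"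
proof -
  define K where "K = nat \<lceil>hh (2^m) t\<rceil>"
  have cardK: "K \<le> card {x. x < 2^m \<and> (\<forall>i<t. U i ! x = V i ! x)}"
    if "real (card {x. x < 2^m \<and> (\<forall>i<t. U i ! x = V i ! x)}) \<ge> hh (2^m) t" for U V :: "nat \<Rightarrow> bool list"
    using that unfolding K_def by (simp add: nat_le_iff ceiling_le_iff)
  have "R_t t 1 m \<le> 2^m - K"
    unfolding R_t_def
  proof (rule cov_le)
    fix V :: "nat \<Rightarrow> bool list" assume len: "\<forall>i<t. length (V i) = 2^m"
    obtain U where U: "\<forall>i<t. U i \<in> RM 1 m"
      and big: "real (card {x. x < 2^m \<and> (\<forall>i<t. U i ! x = V i ! x)}) \<ge> hh (2^m) t"
      using seq len by blast
    have "d_t t V U = 2^m - card {x. x < 2^m \<and> (\<forall>i<t. U i ! x = V i ! x)}"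
      using len U RM_length by (intro dist_eq) blast
    also have "\<dots> \<le> 2^m - K" using cardK[OF big] by simp
    finally show "\<exists>U. (\<forall>i<t. U i \<in> RM 1 m) \<and> d_t t V U \<le> 2^m - K" using U by blast
  qed
  then have RK: "real (R_t t 1 m) \<le> real (2^m - K)" by (simp only: of_nat_le_iff)
  moreover have "K \<le> 2^m"
  proof -
    define V0 :: "nat \<Rightarrow> bool list" where "V0 = (\<lambda>_. replicate (2^m) False)"
    have l0: "\<forall>i<t. length (V0 i) = 2^m" by (simp add: V0_def)
    obtain U where "real (card {x. x < 2^m \<and> (\<forall>i<t. U i ! x = V0 i ! x)}) \<ge> hh (2^m) t"
      using seq[of t m] l0 by blast
    then have "K \<le> card {x. x < 2^m \<and> (\<forall>i<t. U i ! x = V0 i ! x)}" by (rule cardK)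
    also have "\<dots> \<le> card {..<(2::nat)^m}" by (rule card_mono) auto
    finally show ?thesis by simp
  qed
  ultimately have "real (R_t t 1 m) \<le> 2^m - real K" by (simp add: of_nat_diff)
  moreover have "real K = real_of_int \<lceil>hh (2^m) t\<rceil>"
  proof -
    have "hh (2^m) t \<ge> 0"
      by (induction t) auto
    then show ?thesis unfolding K_def by simp
  qed
  ultimately show ?thesis by simp
qed


lemma nat_sq: "4 \<le> m \<Longrightarrow> m^2 \<le> (2::nat)^m"
proof (induction m rule: nat_induct_at_least)
  case base then show ?case by simp
next
  case (Suc n)
  have "(Suc n)^2 = n^2 + 2*n + 1" by (simp add: power2_eq_square)
  also have "\<dots> \<le> 2 * n^2"
  proof -
    have h: "4*n \<le> n*n" using Suc.hyps mult_le_mono1 by blast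
    then show ?thesis unfolding power2_eq_square using Suc.hyps by linarith
  qed
  also have "\<dots> \<le> 2 * 2^n" using Suc.IH by simp
  finally show ?case by simp
qed

lemma nat_sq2: "25 * m^2 \<le> 36 * (2::nat)^m"
proof (cases "m \<ge> 4")
  case True then show ?thesis using nat_sq[OF True] by linarith
next
  case False then have "m = 0 \<or> m = 1 \<or> m = 2 \<or> m = 3" by auto
  then show ?thesis by auto
qed

lemma m_le_sqrt: "real m \<le> 6/5 * sqrt (2^m)"
proof -
  have "25 * (real m)^2 \<le> 36 * 2^m" using nat_sq2[of m]
    by (metis (mono_tags, lifting) of_nat_le_iff of_nat_mult of_nat_numeral of_nat_power)
  moreover have "(6/5 * sqrt (2^m::real))^2 = (6/5)^2 * (sqrt (2^m))^2" by (rule power_mult_distrib)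
  moreover have "(sqrt (2^m::real))^2 = 2^m" by simp
  ultimately have "(real m)^2 \<le> (6/5 * sqrt (2^m))^2" by (simp add: power2_eq_square)
  then show ?thesis by (rule power2_le_imp_le) simp
qed

lemma m_le_sqrt1: "m \<noteq> 3 \<Longrightarrow> real m \<le> sqrt (2^m)"
proof -
  assume "m \<noteq> 3"
  then have "m^2 \<le> (2::nat)^m"
  proof (cases "m \<ge> 4")
    case True then show ?thesis by (rule nat_sq)
  next
    case False then have "m = 0 \<or> m = 1 \<or> m = 2" using \<open>m \<noteq> 3\<close> by auto
    then show ?thesis by auto
  qed
  then have "(real m)^2 \<le> 2^m"
    by (metis of_nat_le_iff of_nat_numeral of_nat_power)
  then show ?thesis by (simp add: real_le_rsqrt)
qed

lemma hh_nonneg: "n \<ge> 0 \<Longrightarrow> hh n k \<ge> 0"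
  by (induction k) auto

lemma hh_lower: "n \<ge> 0 \<Longrightarrow> hh n k \<ge> n / 2^k"
proof (induction k)
  case 0 then show ?case by simp
next
  case (Suc k)
  have s0: "sqrt (hh n k) \<ge> 0" using hh_nonneg[OF Suc.prems] by simp
  have "n / 2^Suc k = (n/2^k)/2" by simp
  also have "\<dots> \<le> hh n k / 2" using Suc by simp
  also have "\<dots> \<le> hh n (Suc k)" using s0 by simp
  finally show ?case .
qed

lemma hh_two:
  assumes n: "n \<ge> 0"
  shows "hh n (Suc (Suc k)) \<ge> n / 2^(k+2) + sqrt (n / 2^k) / 4 + sqrt (n / 2^(k+1)) / 2"
proof -
  define p where "p = n / 2^k"
  have a: "hh n k \<ge> p" using hh_lower[OF n] by (simp add: p_def)
  have p0: "p \<ge> 0" using n by (simp add: p_def)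
  have hS: "hh n (Suc k) = hh n k / 2 + sqrt (hh n k) / 2" by simp
  have b: "hh n (Suc k) \<ge> p/2 + sqrt p / 2"
    using a real_sqrt_le_mono[OF a] hS by linarith
  have b2: "hh n (Suc k) \<ge> p/2" using b real_sqrt_ge_zero[OF p0] by linarith
  have "hh n (Suc (Suc k)) = hh n (Suc k) / 2 + sqrt (hh n (Suc k)) / 2" by simp
  also have "\<dots> \<ge> (p/2 + sqrt p / 2) / 2 + sqrt (p/2) / 2"
  proof -
    have "(p/2 + sqrt p / 2) / 2 \<le> hh n (Suc k) / 2" using b by simp
    moreover have "sqrt (p/2) / 2 \<le> sqrt (hh n (Suc k)) / 2" using real_sqrt_le_mono[OF b2] by simp
    ultimately show ?thesis by (rule add_mono)
  qed
  finally have h4: "hh n (Suc (Suc k)) \<ge> (p/2 + sqrt p / 2) / 2 + sqrt (p/2) / 2" .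
  have "(p/2 + sqrt p / 2) / 2 = p/4 + sqrt p / 4" by simp
  with h4 have h5: "hh n (Suc (Suc k)) \<ge> p/4 + sqrt p / 4 + sqrt (p/2) / 2" by simp
  have e1: "n / 2^(k+2) = p/4" by (simp add: p_def)
  have e2: "n / 2^(k+1) = p/2" by (simp add: p_def)
  have e0: "n / 2^k = p" by (simp add: p_def)
  show ?thesis unfolding e0 e1 e2 by (rule h5)
qed

lemma R1_final:
  "real (R_t t 1 m) \<le> (1 - 1 / 2 ^ t) * 2 ^ m - sqrt (2 ^ t - 1) / 2 ^ t * real m"
proof -
  let ?n = "(2::real)^m" and ?Q = "(2::real)^t"
  have goal: "?n / ?Q + sqrt (?Q - 1) / ?Q * real m \<le> real_of_int \<lceil>hh ?n t\<rceil>"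
  proof (cases t)
    case 0
    then show ?thesis by simp
  next
    case (Suc t')
    show ?thesis
    proof (cases t')
      case 0
      with Suc have t1: "t = 1" by simp
      show ?thesis
      proof (cases "m = 3")
        case True
        have "(2::real) < sqrt 8" by (rule real_less_rsqrt) simp
        then have "sqrt 8 > (2::real)" by simp
        then have "hh 8 1 > 5" by simp
        then have "\<lceil>hh 8 1\<rceil> \<ge> 6" by (simp add: le_ceiling_iff)
        then have six: "real_of_int \<lceil>hh 8 1\<rceil> \<ge> 6" by linarith
        have e: "hh ((2::real)^m) t = hh 8 1" using t1 True by simp
        have h11: "(2::real)^m / 2^t + sqrt (2^t - 1) / 2^t * real m = 11/2" using t1 True by simp
        show ?thesis unfolding e using six h11 by linarith
      next
        case False
        have "real m \<le> sqrt ?n" using m_le_sqrt1[OF False] by simp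
        then have "?n / 2 + real m / 2 \<le> hh ?n 1" by simp
        also have "\<dots> \<le> real_of_int \<lceil>hh ?n 1\<rceil>" by linarith
        finally show ?thesis using t1 by simp
      qed
    next
      case (Suc k)
      with \<open>t = Suc t'\<close> have tk: "t = Suc (Suc k)" by simp
      define s where "s = sqrt (?n / ?Q)"
      have Qk: "?Q = 4 * 2^k" using tk by simp
      have s1: "sqrt (?n / 2^k) = 2 * s"
      proof -
        have "?n / 2^k = 4 * (?n / ?Q)" using Qk by simp
        moreover have "sqrt (4 * (?n / ?Q)) = sqrt 4 * sqrt (?n / ?Q)" by (rule real_sqrt_mult)
        moreover have "sqrt 4 = (2::real)" by (rule real_sqrt_unique) auto
        ultimately show ?thesis by (simp only: s_def)
      qed
      have s2: "sqrt (?n / 2^(k+1)) = sqrt 2 * s"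
      proof -
        have "?n / 2^(k+1) = 2 * (?n / ?Q)" using Qk by simp
        moreover have "sqrt (2 * (?n / ?Q)) = sqrt 2 * sqrt (?n / ?Q)" by (rule real_sqrt_mult)
        ultimately show ?thesis by (simp only: s_def)
      qed
      have hl: "hh ?n t \<ge> ?n / ?Q + s / 2 + sqrt 2 * s / 2"
        using hh_two[of ?n k] s1 s2 tk by simp
      have s0: "s \<ge> 0" by (simp add: s_def)
      have r2: "sqrt 2 \<ge> 7/5"
      proof -
        have "sqrt ((7/5)^2) \<le> sqrt 2" by (rule real_sqrt_le_mono) (simp add: power2_eq_square)
        then show ?thesis by simp
      qed
      have hl2: "hh ?n t \<ge> ?n / ?Q + 6/5 * s"
      proof -
        have "7/5 * s \<le> sqrt 2 * s" by (rule mult_right_mono[OF r2 s0])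
        then show ?thesis using hl by linarith
      qed
      have Q1: "?Q \<ge> 1" by simp
      have sq: "sqrt ?Q > 0" by simp
      have e1: "sqrt (?Q - 1) / ?Q \<le> 1 / sqrt ?Q"
      proof -
        have "sqrt (?Q - 1) \<le> sqrt ?Q" by (rule real_sqrt_le_mono) simp
        then have "sqrt (?Q - 1) / ?Q \<le> sqrt ?Q / ?Q" by (simp add: divide_right_mono)
        also have "sqrt ?Q / ?Q = 1 / sqrt ?Q"
          using sq by (simp add: field_simps)
        finally show ?thesis .
      qed
      have e2: "s = sqrt ?n / sqrt ?Q" by (simp add: s_def real_sqrt_divide)
      have "sqrt (?Q - 1) / ?Q * real m \<le> 1 / sqrt ?Q * real m"
        by (rule mult_right_mono[OF e1]) simp
      also have "\<dots> \<le> 1 / sqrt ?Q * (6/5 * sqrt ?n)"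
        by (rule mult_left_mono[OF m_le_sqrt]) simp
      also have "\<dots> = 6/5 * s" using e2 by simp
      finally have "sqrt (?Q - 1) / ?Q * real m \<le> 6/5 * s" .
      then have "?n / ?Q + sqrt (?Q - 1) / ?Q * real m \<le> hh ?n t" using hl2 by linarith
      also have "\<dots> \<le> real_of_int \<lceil>hh ?n t\<rceil>" by linarith
      finally show ?thesis .
    qed
  qed
  have "(1 - 1 / ?Q) * ?n = ?n - ?n / ?Q" by (simp add: algebra_simps)
  then show ?thesis using R1_hh[of t m] goal by linarith
qed


lemma F_nonneg:
  "sqrt (2 ^ t - 1) / 2 ^ t * 1 \<le> (1 - 1 / 2 ^ t) * (2::real) ^ Suc m"
proof (cases t)
  case 0 then show ?thesis by simp
next
  case (Suc t')
  let ?Q = "(2::real)^t"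
  have Q2: "?Q \<ge> 2" using Suc by (simp add: self_le_power)
  have x1: "?Q - 1 \<ge> 1" using Q2 by simp
  have "sqrt (?Q - 1) \<le> sqrt ((?Q - 1)^2)"
  proof (rule real_sqrt_le_mono)
    have "(?Q - 1) * 1 \<le> (?Q - 1) * (?Q - 1)" by (rule mult_left_mono[OF x1]) (use x1 in simp)
    then show "?Q - 1 \<le> (?Q - 1)^2" by (simp add: power2_eq_square)
  qed
  also have "sqrt ((?Q - 1)^2) = ?Q - 1" using x1 by simp
  also have "\<dots> \<le> (?Q - 1) * 2 ^ Suc m"
  proof -
    have p1: "(1::real) \<le> 2 ^ Suc m" by (rule one_le_power) simp
    have "(?Q - 1) * 1 \<le> (?Q - 1) * 2 ^ Suc m" by (rule mult_left_mono[OF p1]) (use x1 in simp)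
    then show ?thesis by simp
  qed
  finally have a: "sqrt (?Q - 1) \<le> (?Q - 1) * 2 ^ Suc m" .
  have "(1 - 1 / ?Q) * 2 ^ Suc m = (?Q - 1) * 2 ^ Suc m / ?Q" using Q2 by (simp add: field_simps)
  moreover have "sqrt (?Q - 1) / ?Q \<le> (?Q - 1) * 2 ^ Suc m / ?Q"
    using a Q2 by (simp add: divide_right_mono)
  ultimately show ?thesis by simp
qed

theorem lemma17:
  fixes m t r :: nat
  assumes "1 \<le> r" and "r \<le> m"
  shows "real (R_t t r m) \<le> (1 - 1 / 2 ^ t) * 2 ^ m
           - sqrt (2 ^ t - 1) / 2 ^ t * real (m choose r)"
proof -
  have "\<forall>r. 1 \<le> r \<and> r \<le> m \<longrightarrow> real (R_t t r m) \<le> (1 - 1 / 2 ^ t) * 2 ^ m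
           - sqrt (2 ^ t - 1) / 2 ^ t * real (m choose r)"
  proof (induction m)
    case 0 show ?case by simp
  next
    case (Suc m)
    show ?case
    proof (intro allI impI)
      fix r assume r: "1 \<le> r \<and> r \<le> Suc m"
      consider "r = Suc m" | "r = 1" "r \<noteq> Suc m" | "2 \<le> r" "r \<le> m" using r by linarith
      then show "real (R_t t r (Suc m)) \<le> (1 - 1 / 2 ^ t) * 2 ^ Suc m
           - sqrt (2 ^ t - 1) / 2 ^ t * real (Suc m choose r)"
      proof cases
        case 1
        then show ?thesis using F_nonneg[of t m] by (simp add: R_full)
      next
        case 2
        then show ?thesis using R1_final[of t "Suc m"] by simp
      next
        case 3
        then obtain r' where r': "r = Suc r'" and r'1: "1 \<le> r'" by (cases r) auto
        have rec: "R_t t r (Suc m) \<le> R_t t r m + R_t t r' m"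
          using R_rec[of r m t] 3 r' by simp
        have IH1: "real (R_t t r m) \<le> (1 - 1 / 2 ^ t) * 2 ^ m - sqrt (2 ^ t - 1) / 2 ^ t * real (m choose r)"
          using Suc.IH 3 by simp
        have IH2: "real (R_t t r' m) \<le> (1 - 1 / 2 ^ t) * 2 ^ m - sqrt (2 ^ t - 1) / 2 ^ t * real (m choose r')"
          using Suc.IH 3 r' r'1 by simp
        have ch: "real (Suc m choose r) = real (m choose r') + real (m choose r)"
          using r' by simp
        define c where "c = sqrt (2 ^ t - 1) / (2::real) ^ t"
        define z where "z = (1 - 1 / 2 ^ t) * (2::real) ^ m"
        have zz: "(1 - 1 / 2 ^ t) * (2::real) ^ Suc m = 2 * z" by (simp add: z_def)
        have cc: "c * real (Suc m choose r) = c * real (m choose r') + c * real (m choose r)"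
          using ch by (simp add: distrib_left)
        have "real (R_t t r (Suc m)) \<le> real (R_t t r m) + real (R_t t r' m)"
          using rec by linarith
        also have "\<dots> \<le> 2 * z - c * real (Suc m choose r)"
          using IH1 IH2 cc unfolding c_def[symmetric] z_def[symmetric] by linarith
        finally show ?thesis unfolding zz c_def .
      qed
    qed
  qed
  then show ?thesis using assms by blast
qed

end
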